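(* Let $\mathcal X$ be a finite abelian group, $\mathcal Z$ a finite set, $P_{XZ}$ a distribution on $\mathcal X\times\mathcal Z$ and $W_{XZ|X}(x,z|x'):=P_{XZ}(x-x',z)$ the associated conditional additive channel. For any finite set $\mathcal M$ and distribution $P_M$ on $\mathcal M$: (1) for every $s\in(0,1)$, \[P_{js}(P_M,W_{XZ|X})\le\Big(\frac{e^{H_{1-s}(M)+H^{\downarrow}_{1-s}(X|Z)}}{|\mathcal X|}\Big)^{s};\] (2) for every $s\in(0,\tfrac12]$, \[P_{js}(P_M,W_{XZ|X})\le\Big(\frac{e^{H_{1-s}(M)+H^{\uparrow}_{1-s}(X|Z)}}{|\mathcal X|}\Big)^{\frac{s}{1-s}}.\]
   Context: A code $\phi=(\mathsf e,\mathsf d)$ consists of $\mathsf e:\mathcal M\to\mathcal X$ and $\mathsf d:\mathcal X\times\mathcal Z\to\mathcal M$; $P_{js}[\phi|P_M,W]:=\sum_m P_M(m)W(\{y:\mathsf d(y)\ne m\}|\mathsf e(m))$ and $P_{js}(P_M,W):=\inf_\phi P_{js}[\phi|P_M,W]$. $H_{1-s}(M):=\frac1s\log\sum_mP_M(m)^{1-s}$. For a distribution $Q_Z$ on $\mathcal Z$, $H_{1-s}(P_{XZ}|Q_Z):=\frac1s\log\sum_{x,z}P_{XZ}(x,z)^{1-s}Q_Z(z)^s$ (sum over the support of $P_{XZ}$). $H^{\downarrow}_{1-s}(X|Z):=H_{1-s}(P_{XZ}|P_Z)$ with $P_Z$ the marginal, and $H^{\uparrow}_{1-s}(X|Z):=H_{1-s}(P_{XZ}|P_Z^{(1-s)})$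 where $P_Z^{(1-s)}(z):=\big[\sum_xP_{XZ}(x,z)^{1-s}\big]^{\frac1{1-s}}\big/\sum_{z'}\big[\sum_xP_{XZ}(x,z')^{1-s}\big]^{\frac1{1-s}}$. *)

theory Defs
  imports Complex_Main
begin

definition is_dist :: "('a::finite \<Rightarrow> real) \<Rightarrow> bool" where
  "is_dist p \<longleftrightarrow> (\<forall>a. 0 \<le> p a) \<and> (\<Sum>a\<in>UNIV. p a) = 1"

text \<open>Conditional additive channel: W (x,z | x') = P_XZ (x - x', z).
  The channel is given as input letter \<Rightarrow> distribution on outputs.\<close>
definition cond_add_channel ::
  "('x::ab_group_add \<times> 'z \<Rightarrow> real) \<Rightarrow> 'x \<Rightarrow> ('x \<times> 'z \<Rightarrow> real)" where
  "cond_add_channel P x' = (\<lambda>(x, z). P (x - x', z))"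

definition err_prob ::
  "('m::finite \<Rightarrow> real) \<Rightarrow> ('x \<Rightarrow> 'y::finite \<Rightarrow> real) \<Rightarrow> ('m \<Rightarrow> 'x) \<Rightarrow> ('y \<Rightarrow> 'm) \<Rightarrow> real" where
  "err_prob PM W e d = (\<Sum>m\<in>UNIV. PM m * (\<Sum>y\<in>{y. d y \<noteq> m}. W (e m) y))"

definition Pjs ::
  "('m::finite \<Rightarrow> real) \<Rightarrow> ('x::finite \<Rightarrow> 'y::finite \<Rightarrow> real) \<Rightarrow> real" where
  "Pjs PM W = Inf ((\<lambda>(e, d). err_prob PM W e d) ` (UNIV :: (('m \<Rightarrow> 'x) \<times> ('y \<Rightarrow> 'm)) set))"

text \<open>Renyi entropy H_{1-s}(M) (natural logarithm).\<close>
definition renyi_ent :: "real \<Rightarrow> ('m::finite \<Rightarrow> real) \<Rightarrow> real" where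
  "renyi_ent s PM = (1 / s) * ln (\<Sum>m\<in>UNIV. PM m powr (1 - s))"

text \<open>H_{1-s}(P_XZ | Q_Z), sum over the support of P_XZ.\<close>
definition cond_renyi :: "real \<Rightarrow> ('x::finite \<times> 'z::finite \<Rightarrow> real) \<Rightarrow> ('z \<Rightarrow> real) \<Rightarrow> real" where
  "cond_renyi s P Q = (1 / s) * ln (\<Sum>p\<in>{p. P p \<noteq> 0}. P p powr (1 - s) * Q (snd p) powr s)"

definition marg_Z :: "('x::finite \<times> 'z \<Rightarrow> real) \<Rightarrow> 'z \<Rightarrow> real" where
  "marg_Z P z = (\<Sum>x\<in>UNIV. P (x, z))"

definition tilted_Z :: "real \<Rightarrow> ('x::finite \<times> 'z::finite \<Rightarrow> real) \<Rightarrow> 'z \<Rightarrow> real" where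
  "tilted_Z s P z = (\<Sum>x\<in>UNIV. P (x, z) powr (1 - s)) powr (1 / (1 - s)) /
      (\<Sum>z'\<in>UNIV. (\<Sum>x\<in>UNIV. P (x, z') powr (1 - s)) powr (1 / (1 - s)))"

definition H_down :: "real \<Rightarrow> ('x::finite \<times> 'z::finite \<Rightarrow> real) \<Rightarrow> real" where
  "H_down s P = cond_renyi s P (marg_Z P)"

definition H_up :: "real \<Rightarrow> ('x::finite \<times> 'z::finite \<Rightarrow> real) \<Rightarrow> real" where
  "H_up s P = cond_renyi s P (tilted_Z s P)"

end

theory Submission imports Defs "HOL-Analysis.Convex" begin

lemma tangent_powr:
  fixes t \<rho> :: real
  assumes "0 \<le> t" "0 < \<rho>" "\<rho> \<le> 1"
  shows "t powr \<rho> \<le> \<rho> * t + (1 - \<rho>)"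
proof (cases "t = 0")
  case True then show ?thesis using assms by simp
next
  case False
  then have "t powr \<rho> * 1 powr (1-\<rho>) \<le> \<rho> * t + (1-\<rho>) * 1"
    using assms by (intro Youngs_inequality_0) auto
  then show ?thesis by simp
qed

lemma jensen_powr:
  fixes f :: "'a \<Rightarrow> real"
  assumes S: "finite S" "S \<noteq> {}" and f: "\<And>e. e \<in> S \<Longrightarrow> 0 \<le> f e" and r: "0 < \<rho>" "\<rho> \<le> 1"
  shows "(\<Sum>e\<in>S. f e powr \<rho>) \<le> real (card S) * ((\<Sum>e\<in>S. f e) / real (card S)) powr \<rho>"
proof -
  define l where "l = (\<Sum>e\<in>S. f e) / real (card S)"
  have cS: "real (card S) > 0" using S by auto
  have l0: "l \<ge> 0" unfolding l_def using f by (simp add: sum_nonneg)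
  show ?thesis
  proof (cases "l = 0")
    case True
    then have "(\<Sum>e\<in>S. f e) = 0" using cS unfolding l_def by simp
    then have "\<forall>e\<in>S. f e = 0" using sum_nonneg_eq_0_iff[OF S(1)] f by blast
    then show ?thesis by simp
  next
    case False
    then have lp: "l > 0" using l0 by simp
    have "\<And>e. e \<in> S \<Longrightarrow> f e powr \<rho> \<le> l powr \<rho> * (\<rho> * (f e / l) + (1 - \<rho>))"
    proof -
      fix e assume e: "e \<in> S"
      have "(f e / l) powr \<rho> \<le> \<rho> * (f e / l) + (1 - \<rho>)"
        using tangent_powr[of "f e / l" \<rho>] f[OF e] lp r by simp
      moreover have "(f e / l) powr \<rho> = f e powr \<rho> / l powr \<rho>"
        using f[OF e] lp by (simp add: powr_divide)
      ultimately show "f e powr \<rho> \<le> l powr \<rho> * (\<rho> * (f e / l) + (1 - \<rho>))"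
        using lp by (simp add: divide_le_eq mult.commute)
    qed
    then have "(\<Sum>e\<in>S. f e powr \<rho>) \<le> (\<Sum>e\<in>S. l powr \<rho> * (\<rho> * (f e / l) + (1 - \<rho>)))"
      by (rule sum_mono)
    also have "\<dots> = (\<Sum>e\<in>S. (l powr \<rho> * \<rho> / l) * f e + l powr \<rho> * (1 - \<rho>))"
      by (rule sum.cong) (auto simp: algebra_simps)
    also have "\<dots> = (l powr \<rho> * \<rho> / l) * (\<Sum>e\<in>S. f e) + real (card S) * (l powr \<rho> * (1 - \<rho>))"
      by (simp add: sum.distrib sum_distrib_left)
    also have "\<dots> = l powr \<rho> * (\<rho> / l * (\<Sum>e\<in>S. f e) + real (card S) * (1 - \<rho>))"
      by (simp add: algebra_simps)
    also have "\<dots> = l powr \<rho> * real (card S)"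
      using cS lp unfolding l_def by (simp add: field_simps)
    finally show ?thesis unfolding l_def by (simp add: mult.commute)
  qed
qed

lemma sum_shift:
  fixes h :: "'x::{finite,ab_group_add} \<Rightarrow> real"
  shows "(\<Sum>a\<in>UNIV. h (c + a)) = (\<Sum>x\<in>UNIV. h x)"
  by (rule sum.reindex_bij_witness[where i="\<lambda>x. x - c" and j="\<lambda>a. c + a"]) auto

lemma sum_fiber_other:
  fixes h :: "'x::{finite,ab_group_add} \<Rightarrow> real" and m m' :: "'m::finite"
  assumes "m' \<noteq> m"
  shows "real (card (UNIV::'x set)) * (\<Sum>e\<in>{e::'m\<Rightarrow>'x. e m = x}. h (e m'))
       = real (card {e::'m\<Rightarrow>'x. e m = x}) * (\<Sum>x'\<in>UNIV. h x')"
proof -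
  have shift: "(\<Sum>e\<in>{e::'m\<Rightarrow>'x. e m = x}. h (e m')) = (\<Sum>e\<in>{e::'m\<Rightarrow>'x. e m = x}. h (e m' + a))" for a
    by (rule sum.reindex_bij_witness[where i="\<lambda>e. e(m' := e m' + a)" and j="\<lambda>e. e(m' := e m' - a)"])
       (use assms in auto)
  have "real (card (UNIV::'x set)) * (\<Sum>e\<in>{e::'m\<Rightarrow>'x. e m = x}. h (e m'))
      = (\<Sum>a\<in>UNIV. (\<Sum>e\<in>{e::'m\<Rightarrow>'x. e m = x}. h (e m' + a)))"
    by (simp add: shift[symmetric])
  also have "\<dots> = (\<Sum>e\<in>{e::'m\<Rightarrow>'x. e m = x}. (\<Sum>a\<in>UNIV. h (e m' + a)))"
    by (rule sum.swap)
  also have "\<dots> = (\<Sum>e\<in>{e::'m\<Rightarrow>'x. e m = x}. (\<Sum>x'\<in>UNIV. h x'))"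
    by (simp add: sum_shift)
  finally show ?thesis by simp
qed

lemma card_fiber:
  fixes m :: "'m::finite"
  shows "real (card (UNIV::'x::{finite,ab_group_add} set)) * real (card {e::'m\<Rightarrow>'x. e m = x}) = real (card (UNIV::('m\<Rightarrow>'x) set))"
proof -
  have eq: "card {e::'m\<Rightarrow>'x. e m = x} = card {e::'m\<Rightarrow>'x. e m = 0}" for x
  proof (rule bij_betw_same_card[where f="\<lambda>e. e(m := e m - x)"])
    show "bij_betw (\<lambda>e. e(m := e m - x)) {e::'m\<Rightarrow>'x. e m = x} {e::'m\<Rightarrow>'x. e m = 0}"
      by (rule bij_betw_byWitness[where f'="\<lambda>e. e(m := e m + x)"]) auto
  qed
  have U: "(UNIV::('m\<Rightarrow>'x) set) = (\<Union>x. {e::'m\<Rightarrow>'x. e m = x})" by blast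
  have "card (UNIV::('m\<Rightarrow>'x) set) = (\<Sum>x\<in>UNIV. card {e::'m\<Rightarrow>'x. e m = x})"
    unfolding U by (rule card_UN_disjoint) auto
  also have "\<dots> = (\<Sum>x\<in>(UNIV::'x set). card {e::'m\<Rightarrow>'x. e m = 0})"
    by (rule sum.cong[OF refl], rule eq)
  also have "\<dots> = card (UNIV::'x set) * card {e::'m\<Rightarrow>'x. e m = 0}"
    by simp
  finally have "card (UNIV::('m\<Rightarrow>'x) set) = card (UNIV::'x set) * card {e::'m\<Rightarrow>'x. e m = x}"
    using eq[of x] by simp
  then show ?thesis by (metis of_nat_mult)
qed


definition map_dec :: "('m::finite \<Rightarrow> real) \<Rightarrow> ('x \<Rightarrow> 'y \<Rightarrow> real) \<Rightarrow> ('m \<Rightarrow> 'x) \<Rightarrow> 'y \<Rightarrow> 'm" where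
  "map_dec PM W e y = (SOME m. \<forall>m'. PM m' * W (e m') y \<le> PM m * W (e m) y)"

lemma map_dec_max:
  fixes PM :: "'m::finite \<Rightarrow> real"
  shows "PM m' * W (e m') y \<le> PM (map_dec PM W e y) * W (e (map_dec PM W e y)) y"
proof -
  let ?f = "\<lambda>m. PM m * W (e m) y"
  have "Max (range ?f) \<in> range ?f" by (rule Max_in) auto
  then obtain m0 where m0: "?f m0 = Max (range ?f)" by (metis (no_types, lifting) imageE)
  have "\<forall>m'. ?f m' \<le> ?f m0" unfolding m0 by auto
  then have "\<exists>m. \<forall>m'. ?f m' \<le> ?f m" by blast
  then have "\<forall>m'. ?f m' \<le> ?f (map_dec PM W e y)"
    unfolding map_dec_def by (rule someI_ex)
  then show ?thesis by blast
qed

lemma Pjs_le_err: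
  fixes PM :: "'m::finite \<Rightarrow> real" and W :: "'x::finite \<Rightarrow> 'y::finite \<Rightarrow> real"
  shows "Pjs PM W \<le> err_prob PM W e d"
  unfolding Pjs_def
  by (rule cInf_lower) (auto intro: bdd_below_finite)

lemma indicator_bound:
  fixes PM :: "'m::finite \<Rightarrow> real"
  assumes PM: "\<And>m. 0 \<le> PM m" and W: "\<And>x y. 0 \<le> W x y" and u: "0 < u" and r: "0 < \<rho>"
  shows "PM m * (W (e m) y * (if map_dec PM W e y \<noteq> m then 1 else 0))
     \<le> PM m * (W (e m) y * ((\<Sum>m'\<in>-{m}. (PM m' * W (e m') y) powr u) / (PM m * W (e m) y) powr u) powr \<rho>)"
proof -
  let ?G = "(\<Sum>m'\<in>-{m}. (PM m' * W (e m') y) powr u)"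
  let ?a = "PM m * W (e m) y"
  have a0: "0 \<le> ?a" using PM W by simp
  have rhs0: "0 \<le> PM m * (W (e m) y * (?G / ?a powr u) powr \<rho>)"
    using PM W by simp
  show ?thesis
  proof (cases "map_dec PM W e y \<noteq> m \<and> ?a \<noteq> 0")
    case False
    then show ?thesis using rhs0 by (auto simp: mult.assoc[symmetric])
  next
    case True
    define m0 where "m0 = map_dec PM W e y"
    have m0: "m0 \<in> -{m}" using True m0_def by auto
    have ap: "0 < ?a" using True a0 by linarith
    have "?a powr u \<le> (PM m0 * W (e m0) y) powr u"
      using map_dec_max[of PM m W e y] ap u unfolding m0_def by (intro powr_mono2) auto
    also have "\<dots> \<le> ?G"
      by (rule member_le_sum[OF m0]) auto
    finally have "?a powr u \<le> ?G" .
    moreover have "0 < ?a powr u" using ap by (metis powr_gt_zero less_irrefl)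
    ultimately have "1 \<le> ?G / ?a powr u" by simp
    then have "1 \<le> (?G / ?a powr u) powr \<rho>" using r by (intro ge_one_powr_ge_zero) auto
    then have "W (e m) y * 1 \<le> W (e m) y * (?G / ?a powr u) powr \<rho>"
      using W by (intro mult_left_mono) auto
    then show ?thesis using True PM by (auto intro: mult_left_mono)
  qed
qed

lemma err_map_dec_bound:
  fixes PM :: "'m::finite \<Rightarrow> real" and W :: "'x \<Rightarrow> 'y::finite \<Rightarrow> real"
  assumes PM: "\<And>m. 0 \<le> PM m" and W: "\<And>x y. 0 \<le> W x y" and u: "0 < u" and r: "0 < \<rho>"
  shows "err_prob PM W e (map_dec PM W e)
     \<le> (\<Sum>m\<in>UNIV. PM m * (\<Sum>y\<in>UNIV. W (e m) y * ((\<Sum>m'\<in>-{m}. (PM m' * W (e m') y) powr u) / (PM m * W (e m) y) powr u) powr \<rho>))"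
proof -
  have "err_prob PM W e (map_dec PM W e) = (\<Sum>m\<in>UNIV. PM m * (\<Sum>y\<in>UNIV. W (e m) y * (if map_dec PM W e y \<noteq> m then 1 else 0)))"
    unfolding err_prob_def
    by (rule sum.cong[OF refl]) (simp add: sum.inter_filter[symmetric] if_distrib cong: if_cong)
  also have "\<dots> \<le> (\<Sum>m\<in>UNIV. PM m * (\<Sum>y\<in>UNIV. W (e m) y * ((\<Sum>m'\<in>-{m}. (PM m' * W (e m') y) powr u) / (PM m * W (e m) y) powr u) powr \<rho>))"
    apply (rule sum_mono)
    apply (simp only: sum_distrib_left)
    apply (rule sum_mono)
    apply (rule indicator_bound[OF PM W u r])
    done
  finally show ?thesis .
qed


lemma fiber_bound:
  fixes PM :: "'m::finite \<Rightarrow> real" and W :: "'x::{finite,ab_group_add} \<Rightarrow> 'y \<Rightarrow> real"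
  assumes PM: "\<And>m. 0 \<le> PM m" and W: "\<And>x y. 0 \<le> W x y" and u: "0 < u" and r: "0 < \<rho>" "\<rho> \<le> 1"
  shows "(\<Sum>e\<in>{e::'m\<Rightarrow>'x. e m = x}. W x y * ((\<Sum>m'\<in>-{m}. (PM m' * W (e m') y) powr u) / (PM m * W x y) powr u) powr \<rho>)
    \<le> real (card {e::'m\<Rightarrow>'x. e m = x}) * (W x y * (((\<Sum>m'\<in>UNIV. \<Sum>x'\<in>UNIV. (PM m' * W x' y) powr u) / real (card (UNIV::'x set))) / (PM m * W x y) powr u) powr \<rho>)"
proof -
  define S where "S = {e::'m\<Rightarrow>'x. e m = x}"
  define A where "A = (PM m * W x y) powr u"
  define N where "N = real (card (UNIV::'x set))"
  define c where "c = (\<lambda>m' x'. (PM m' * W x' y) powr u)"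
  define G where "G = (\<lambda>e::'m\<Rightarrow>'x. \<Sum>m'\<in>-{m}. c m' (e m'))"
  define L where "L = (\<Sum>m'\<in>UNIV. \<Sum>x'\<in>UNIV. c m' x') / N"
  have A0: "0 \<le> A" unfolding A_def by simp
  have N0: "0 < N" unfolding N_def by (simp add: finite_UNIV_card_ge_0)
  have c0: "0 \<le> c m' x'" for m' x' unfolding c_def by simp
  have SF: "finite S" "S \<noteq> {}" unfolding S_def by auto
  have cS: "0 < real (card S)" using SF by auto
  have G0: "0 \<le> G e" for e unfolding G_def using c0 by (simp add: sum_nonneg)
  have sumG: "(\<Sum>e\<in>S. G e) = (\<Sum>m'\<in>-{m}. real (card S) / N * (\<Sum>x'\<in>UNIV. c m' x'))"
  proof -
    have "(\<Sum>e\<in>S. G e) = (\<Sum>m'\<in>-{m}. \<Sum>e\<in>S. c m' (e m'))"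
      unfolding G_def by (rule sum.swap)
    also have "\<dots> = (\<Sum>m'\<in>-{m}. real (card S) / N * (\<Sum>x'\<in>UNIV. c m' x'))"
    proof (rule sum.cong[OF refl])
      fix m' assume "m' \<in> -{m}"
      then have "N * (\<Sum>e\<in>S. c m' (e m')) = real (card S) * (\<Sum>x'\<in>UNIV. c m' x')"
        unfolding S_def N_def by (intro sum_fiber_other) auto
      then show "(\<Sum>e\<in>S. c m' (e m')) = real (card S) / N * (\<Sum>x'\<in>UNIV. c m' x')"
        using N0 by (simp add: field_simps)
    qed
    finally show ?thesis .
  qed
  have meanG: "(\<Sum>e\<in>S. G e) / real (card S) \<le> L"
  proof -
    have "(\<Sum>e\<in>S. G e) / real (card S) = (\<Sum>m'\<in>-{m}. (\<Sum>x'\<in>UNIV. c m' x')) / N"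
    proof -
      have "(\<Sum>m'\<in>-{m}. real (card S) / N * (\<Sum>x'\<in>UNIV. c m' x')) = real (card S) / N * (\<Sum>m'\<in>-{m}. (\<Sum>x'\<in>UNIV. c m' x'))"
        by (simp add: sum_distrib_left)
      then show ?thesis unfolding sumG using cS N0 SF by simp
    qed
    also have "\<dots> \<le> L" unfolding L_def using N0 c0
      by (intro divide_right_mono sum_mono2) (auto simp: sum_nonneg)
    finally show ?thesis .
  qed
  have "(\<Sum>e\<in>S. W x y * (G e / A) powr \<rho>) = W x y * (\<Sum>e\<in>S. (G e / A) powr \<rho>)"
    by (simp add: sum_distrib_left)
  also have "\<dots> \<le> W x y * (real (card S) * ((\<Sum>e\<in>S. G e / A) / real (card S)) powr \<rho>)"
    using W A0 G0 by (intro mult_left_mono jensen_powr SF r) auto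
  also have "(\<Sum>e\<in>S. G e / A) / real (card S) = ((\<Sum>e\<in>S. G e) / real (card S)) / A"
    by (simp add: sum_divide_distrib[symmetric])
  also have "W x y * (real (card S) * (((\<Sum>e\<in>S. G e) / real (card S)) / A) powr \<rho>)
      \<le> W x y * (real (card S) * (L / A) powr \<rho>)"
    using W A0 G0 cS meanG r
    by (intro mult_left_mono powr_mono2 divide_right_mono) (auto simp: sum_nonneg)
  finally show ?thesis
    unfolding S_def A_def N_def c_def G_def L_def by (simp add: algebra_simps)
qed


lemma random_coding:
  fixes PM :: "'m::finite \<Rightarrow> real" and W :: "'x::{finite,ab_group_add} \<Rightarrow> 'y::finite \<Rightarrow> real"
  assumes PM: "\<And>m. 0 \<le> PM m" and W: "\<And>x y. 0 \<le> W x y" and u: "0 < u" and r: "0 < \<rho>" "\<rho> \<le> 1"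
  shows "Pjs PM W \<le> (\<Sum>m\<in>UNIV. PM m * (\<Sum>y\<in>UNIV. \<Sum>x\<in>UNIV. W x y *
            (((\<Sum>m'\<in>UNIV. \<Sum>x'\<in>UNIV. (PM m' * W x' y) powr u) / real (card (UNIV::'x set))) / (PM m * W x y) powr u) powr \<rho>))
          / real (card (UNIV::'x set))"
proof -
  define N where "N = real (card (UNIV::'x set))"
  define C where "C = real (card (UNIV::('m\<Rightarrow>'x) set))"
  define L where "L = (\<lambda>y. (\<Sum>m'\<in>UNIV. \<Sum>x'\<in>UNIV. (PM m' * W x' y) powr u) / N)"
  define T where "T = (\<lambda>m y (e::'m\<Rightarrow>'x). W (e m) y * ((\<Sum>m'\<in>-{m}. (PM m' * W (e m') y) powr u) / (PM m * W (e m) y) powr u) powr \<rho>)"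
  have N0: "0 < N" unfolding N_def by (simp add: finite_UNIV_card_ge_0)
  have C0: "0 < C" unfolding C_def by (simp add: finite_UNIV_card_ge_0)
  have cardS: "real (card {e::'m\<Rightarrow>'x. e m = x}) = C / N" for m x
    using card_fiber[of m x] N0 unfolding C_def N_def by (simp add: field_simps)
  have step: "(\<Sum>e\<in>UNIV. T m y e) \<le> C / N * (\<Sum>x\<in>UNIV. W x y * (L y / (PM m * W x y) powr u) powr \<rho>)" for m y
  proof -
    have "(\<Sum>e\<in>UNIV. T m y e) = (\<Sum>x\<in>UNIV. \<Sum>e\<in>{e. e \<in> UNIV \<and> e m = x}. T m y e)"
      by (rule sum.group[symmetric]) auto
    also have "\<dots> \<le> (\<Sum>x\<in>UNIV. real (card {e::'m\<Rightarrow>'x. e m = x}) * (W x y * (L y / (PM m * W x y) powr u) powr \<rho>))"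
    proof (rule sum_mono)
      fix x :: 'x
      have "(\<Sum>e\<in>{e. e \<in> UNIV \<and> e m = x}. T m y e) = (\<Sum>e\<in>{e::'m\<Rightarrow>'x. e m = x}. W x y * ((\<Sum>m'\<in>-{m}. (PM m' * W (e m') y) powr u) / (PM m * W x y) powr u) powr \<rho>)"
        unfolding T_def by (rule sum.cong) auto
      also have "\<dots> \<le> real (card {e::'m\<Rightarrow>'x. e m = x}) * (W x y * (L y / (PM m * W x y) powr u) powr \<rho>)"
        unfolding L_def N_def by (rule fiber_bound[OF PM W u r])
      finally show "(\<Sum>e\<in>{e. e \<in> UNIV \<and> e m = x}. T m y e) \<le> real (card {e::'m\<Rightarrow>'x. e m = x}) * (W x y * (L y / (PM m * W x y) powr u) powr \<rho>)" .
    qed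
    also have "\<dots> = C / N * (\<Sum>x\<in>UNIV. W x y * (L y / (PM m * W x y) powr u) powr \<rho>)"
      by (simp add: cardS sum_distrib_left)
    finally show ?thesis .
  qed
  have "C * Pjs PM W = (\<Sum>e\<in>(UNIV::('m\<Rightarrow>'x) set). Pjs PM W)"
    unfolding C_def by simp
  also have "\<dots> \<le> (\<Sum>e\<in>UNIV. err_prob PM W e (map_dec PM W e))"
    by (rule sum_mono) (rule Pjs_le_err)
  also have "\<dots> \<le> (\<Sum>e\<in>UNIV. \<Sum>m\<in>UNIV. PM m * (\<Sum>y\<in>UNIV. T m y e))"
    unfolding T_def by (rule sum_mono) (rule err_map_dec_bound[OF PM W u r(1)])
  also have "\<dots> = (\<Sum>m\<in>UNIV. PM m * (\<Sum>y\<in>UNIV. \<Sum>e\<in>UNIV. T m y e))"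
  proof -
    have "(\<Sum>e\<in>UNIV. \<Sum>m\<in>UNIV. PM m * (\<Sum>y\<in>UNIV. T m y e)) = (\<Sum>m\<in>UNIV. \<Sum>e\<in>UNIV. PM m * (\<Sum>y\<in>UNIV. T m y e))"
      by (rule sum.swap)
    also have "\<dots> = (\<Sum>m\<in>UNIV. PM m * (\<Sum>e\<in>UNIV. \<Sum>y\<in>UNIV. T m y e))"
      by (simp only: sum_distrib_left)
    also have "\<dots> = (\<Sum>m\<in>UNIV. PM m * (\<Sum>y\<in>UNIV. \<Sum>e\<in>UNIV. T m y e))"
      by (rule sum.cong[OF refl], rule arg_cong[where f="\<lambda>t. PM _ * t"], rule sum.swap)
    finally show ?thesis .
  qed
  also have "\<dots> \<le> (\<Sum>m\<in>UNIV. PM m * (\<Sum>y\<in>UNIV. C / N * (\<Sum>x\<in>UNIV. W x y * (L y / (PM m * W x y) powr u) powr \<rho>)))"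
    using PM by (intro sum_mono mult_left_mono step) auto
  also have "\<dots> = C * ((\<Sum>m\<in>UNIV. PM m * (\<Sum>y\<in>UNIV. \<Sum>x\<in>UNIV. W x y * (L y / (PM m * W x y) powr u) powr \<rho>)) / N)"
    by (simp add: sum_distrib_left[symmetric] sum_divide_distrib[symmetric] algebra_simps)
  finally have "Pjs PM W \<le> (\<Sum>m\<in>UNIV. PM m * (\<Sum>y\<in>UNIV. \<Sum>x\<in>UNIV. W x y * (L y / (PM m * W x y) powr u) powr \<rho>)) / N"
    using C0 mult_le_cancel_left_pos by blast
  then show ?thesis unfolding L_def N_def .
qed


lemma sum_reflect:
  fixes f :: "'x::{finite,ab_group_add} \<Rightarrow> real"
  shows "(\<Sum>x\<in>UNIV. f (c - x)) = (\<Sum>x\<in>UNIV. f x)"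
  by (rule sum.reindex_bij_witness[where i="\<lambda>x. c - x" and j="\<lambda>x. c - x"]) auto

lemma term_eq:
  fixes a b l u \<rho> :: real
  assumes "0 \<le> a" "0 \<le> b" "0 \<le> l"
  shows "a * (b * (l / (a * b) powr u) powr \<rho>) = a powr (1 - u * \<rho>) * b powr (1 - u * \<rho>) * l powr \<rho>"
proof (cases "a = 0 \<or> b = 0")
  case True then show ?thesis by auto
next
  case False
  then have a: "0 < a" and b: "0 < b" using assms by auto
  have "(l / (a * b) powr u) powr \<rho> = l powr \<rho> / (a * b) powr (u * \<rho>)"
    using a b assms by (simp add: powr_divide powr_powr)
  moreover have "(a * b) powr (u * \<rho>) = a powr (u * \<rho>) * b powr (u * \<rho>)"
    using a b by (simp add: powr_mult)
  moreover have "a powr (1 - u * \<rho>) = a / a powr (u * \<rho>)" using a by (simp add: powr_diff)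
  moreover have "b powr (1 - u * \<rho>) = b / b powr (u * \<rho>)" using b by (simp add: powr_diff)
  ultimately show ?thesis by simp
qed

lemma add_channel_bound:
  fixes P :: "('x::{finite, ab_group_add} \<times> 'z::finite) \<Rightarrow> real" and PM :: "'m::finite \<Rightarrow> real"
  assumes P: "\<And>p. 0 \<le> P p" and PM: "\<And>m. 0 \<le> PM m" and u: "0 < u" and r: "0 < \<rho>" "\<rho> \<le> 1"
  shows "Pjs PM (cond_add_channel P) \<le> (\<Sum>m\<in>UNIV. PM m powr (1 - u * \<rho>)) * (\<Sum>m\<in>UNIV. PM m powr u) powr \<rho>
     * (\<Sum>z\<in>UNIV. \<Sum>x\<in>UNIV. P (x, z) powr (1 - u * \<rho>) * (\<Sum>x'\<in>UNIV. P (x', z) powr u) powr \<rho>)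
     / real (card (UNIV::'x set)) powr \<rho>"
proof -
  define W where "W = cond_add_channel P"
  define N where "N = real (card (UNIV::'x set))"
  define a where "a = 1 - u * \<rho>"
  define SPu where "SPu = (\<Sum>m\<in>UNIV. PM m powr u)"
  define A where "A = (\<lambda>z. \<Sum>x'\<in>UNIV. P (x', z) powr u)"
  have N0: "0 < N" unfolding N_def by (simp add: finite_UNIV_card_ge_0)
  have W0: "0 \<le> W x y" for x y unfolding W_def cond_add_channel_def using P by (simp add: case_prod_beta)
  have Wv: "W x (y1, z) = P (y1 - x, z)" for x y1 z unfolding W_def cond_add_channel_def by simp
  have SPu0: "0 \<le> SPu" unfolding SPu_def by (simp add: sum_nonneg)
  have A0: "0 \<le> A z" for z unfolding A_def by (simp add: sum_nonneg)
  have L: "(\<Sum>m'\<in>UNIV. \<Sum>x'\<in>UNIV. (PM m' * W x' (y1, z)) powr u) = SPu * A z" for y1 z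
  proof -
    have "(\<Sum>m'\<in>UNIV. \<Sum>x'\<in>UNIV. (PM m' * W x' (y1, z)) powr u) = (\<Sum>m'\<in>UNIV. PM m' powr u * (\<Sum>x'\<in>UNIV. P (y1 - x', z) powr u))"
      using PM P by (simp add: Wv powr_mult sum_distrib_left)
    also have "\<dots> = (\<Sum>m'\<in>UNIV. PM m' powr u * A z)"
      unfolding A_def using sum_reflect[of "\<lambda>x. P (x, z) powr u" y1] by simp
    also have "\<dots> = SPu * A z" unfolding SPu_def by (simp add: sum_distrib_right)
    finally show ?thesis .
  qed
  have L': "(\<Sum>m'\<in>UNIV. \<Sum>x'\<in>UNIV. (PM m' * P (y1 - x', z)) powr u) = SPu * A z" for y1 z
    using L[of y1 z] by (simp add: Wv)
  define F where "F = (\<lambda>m z. \<Sum>x\<in>UNIV. PM m powr a * P (x, z) powr a * (SPu * A z / N) powr \<rho>)"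
  have inner: "PM m * (\<Sum>x\<in>UNIV. W x (y1, z) * ((\<Sum>m'\<in>UNIV. \<Sum>x'\<in>UNIV. (PM m' * W x' (y1, z)) powr u) / N / (PM m * W x (y1, z)) powr u) powr \<rho>)
      = F m z" for m y1 z
  proof -
    have "PM m * (\<Sum>x\<in>UNIV. W x (y1, z) * ((\<Sum>m'\<in>UNIV. \<Sum>x'\<in>UNIV. (PM m' * W x' (y1, z)) powr u) / N / (PM m * W x (y1, z)) powr u) powr \<rho>)
        = (\<Sum>x\<in>UNIV. PM m * (P (y1 - x, z) * ((SPu * A z / N) / (PM m * P (y1 - x, z)) powr u) powr \<rho>))"
      by (simp add: L' Wv sum_distrib_left)
    also have "\<dots> = (\<Sum>x\<in>UNIV. PM m powr a * P (y1 - x, z) powr a * (SPu * A z / N) powr \<rho>)"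
      unfolding a_def using PM P SPu0 A0 N0 by (intro sum.cong refl term_eq) auto
    also have "\<dots> = F m z"
      unfolding F_def by (rule sum_reflect[of "\<lambda>x. PM m powr a * P (x, z) powr a * (SPu * A z / N) powr \<rho>"])
    finally show ?thesis .
  qed
  have "Pjs PM W \<le> (\<Sum>m\<in>UNIV. PM m * (\<Sum>y\<in>UNIV. \<Sum>x\<in>UNIV. W x y *
            (((\<Sum>m'\<in>UNIV. \<Sum>x'\<in>UNIV. (PM m' * W x' y) powr u) / N) / (PM m * W x y) powr u) powr \<rho>)) / N"
    unfolding N_def by (rule random_coding[OF PM W0 u r])
  also have "(\<Sum>m\<in>UNIV. PM m * (\<Sum>y\<in>UNIV. \<Sum>x\<in>UNIV. W x y *
            (((\<Sum>m'\<in>UNIV. \<Sum>x'\<in>UNIV. (PM m' * W x' y) powr u) / N) / (PM m * W x y) powr u) powr \<rho>))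
      = (\<Sum>m\<in>UNIV. \<Sum>y\<in>(UNIV::('x\<times>'z) set). F m (snd y))"
  proof (rule sum.cong[OF refl])
    fix m
    define g where "g = (\<lambda>y. \<Sum>x\<in>UNIV. W x y *
            (((\<Sum>m'\<in>UNIV. \<Sum>x'\<in>UNIV. (PM m' * W x' y) powr u) / N) / (PM m * W x y) powr u) powr \<rho>)"
    have "PM m * (\<Sum>y\<in>UNIV. g y) = (\<Sum>y\<in>UNIV. PM m * g y)" by (rule sum_distrib_left)
    also have "\<dots> = (\<Sum>y\<in>(UNIV::('x\<times>'z) set). F m (snd y))"
    proof (rule sum.cong[OF refl])
      fix y :: "'x \<times> 'z"
      obtain y1 z where y: "y = (y1, z)" by (cases y)
      show "PM m * g y = F m (snd y)"
        unfolding y g_def using inner[of m y1 z] by simp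
    qed
    finally show "PM m * (\<Sum>y\<in>UNIV. \<Sum>x\<in>UNIV. W x y *
            (((\<Sum>m'\<in>UNIV. \<Sum>x'\<in>UNIV. (PM m' * W x' y) powr u) / N) / (PM m * W x y) powr u) powr \<rho>)
       = (\<Sum>y\<in>(UNIV::('x\<times>'z) set). F m (snd y))" unfolding g_def .
  qed
  also have "(\<Sum>m\<in>UNIV. \<Sum>y\<in>(UNIV::('x\<times>'z) set). F m (snd y)) = N * (\<Sum>m\<in>UNIV. \<Sum>z\<in>UNIV. F m z)"
  proof -
    have "(\<Sum>y\<in>(UNIV::('x\<times>'z) set). F m (snd y)) = N * (\<Sum>z\<in>UNIV. F m z)" for m
    proof -
      have "(\<Sum>y1\<in>(UNIV::'x set). \<Sum>z\<in>(UNIV::'z set). F m z) = (\<Sum>(y1,z)\<in>(UNIV::'x set) \<times> (UNIV::'z set). F m z)"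
        by (rule sum.cartesian_product)
      also have "\<dots> = (\<Sum>y\<in>(UNIV::('x\<times>'z) set). F m (snd y))"
        by (simp add: case_prod_beta)
      finally show ?thesis unfolding N_def by simp
    qed
    then show ?thesis by (simp add: sum_distrib_left)
  qed
  also have "N * (\<Sum>m\<in>UNIV. \<Sum>z\<in>UNIV. F m z) / N = (\<Sum>m\<in>UNIV. \<Sum>z\<in>UNIV. F m z)" using N0 by simp
  also have "(\<Sum>m\<in>UNIV. \<Sum>z\<in>UNIV. F m z) = (\<Sum>m\<in>UNIV. PM m powr a) * SPu powr \<rho>
     * (\<Sum>z\<in>UNIV. \<Sum>x\<in>UNIV. P (x, z) powr a * A z powr \<rho>) / N powr \<rho>"
  proof -
    have "F m z = PM m powr a * (SPu powr \<rho> / N powr \<rho>) * (\<Sum>x\<in>UNIV. P (x, z) powr a * A z powr \<rho>)" for m z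
      unfolding F_def using SPu0 A0 N0
      by (simp add: powr_divide powr_mult sum_distrib_left algebra_simps)
    then have "(\<Sum>z\<in>UNIV. F m z) = PM m powr a * (SPu powr \<rho> / N powr \<rho>) * (\<Sum>z\<in>UNIV. \<Sum>x\<in>UNIV. P (x, z) powr a * A z powr \<rho>)" for m
      by (simp add: sum_distrib_left)
    then have "(\<Sum>m\<in>UNIV. \<Sum>z\<in>UNIV. F m z) = (\<Sum>m\<in>UNIV. PM m powr a) * (SPu powr \<rho> / N powr \<rho>) * (\<Sum>z\<in>UNIV. \<Sum>x\<in>UNIV. P (x, z) powr a * A z powr \<rho>)"
      by (simp add: sum_distrib_right sum_divide_distrib)
    then show ?thesis by simp
  qed
  finally show ?thesis unfolding W_def a_def SPu_def A_def N_def .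
qed


lemma exists_pos:
  fixes p :: "'a::finite \<Rightarrow> real"
  assumes "is_dist p"
  shows "\<exists>a. 0 < p a"
proof (rule ccontr)
  assume "\<not> ?thesis"
  then have "\<forall>a. p a = 0" using assms unfolding is_dist_def by (metis less_eq_real_def)
  then show False using assms unfolding is_dist_def by simp
qed

lemma sum_powr_pos:
  fixes p :: "'a::finite \<Rightarrow> real"
  assumes "is_dist p"
  shows "0 < (\<Sum>a\<in>UNIV. p a powr t)"
proof -
  obtain a where a: "0 < p a" using exists_pos[OF assms] by blast
  have "0 < p a powr t" using a by simp
  also have "\<dots> \<le> (\<Sum>a\<in>UNIV. p a powr t)" by (rule member_le_sum) auto
  finally show ?thesis .
qed

lemma supp_sum:
  fixes P :: "'x::finite \<times> 'z::finite \<Rightarrow> real"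
  assumes "0 < t"
  shows "(\<Sum>p\<in>{p. P p \<noteq> 0}. P p powr t * g (snd p)) = (\<Sum>z\<in>UNIV. \<Sum>x\<in>UNIV. P (x, z) powr t * g z)"
proof -
  have "(\<Sum>p\<in>{p. P p \<noteq> 0}. P p powr t * g (snd p)) = (\<Sum>p\<in>UNIV. P p powr t * g (snd p))"
    by (rule sum.mono_neutral_left) auto
  also have "\<dots> = (\<Sum>(x, z)\<in>(UNIV::'x set) \<times> (UNIV::'z set). P (x, z) powr t * g z)"
    by (simp add: case_prod_beta)
  also have "\<dots> = (\<Sum>x\<in>UNIV. \<Sum>z\<in>UNIV. P (x, z) powr t * g z)"
    by (rule sum.cartesian_product[symmetric])
  also have "\<dots> = (\<Sum>z\<in>UNIV. \<Sum>x\<in>UNIV. P (x, z) powr t * g z)"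
    by (rule sum.swap)
  finally show ?thesis .
qed

lemma exp_form1:
  fixes R Q N s :: real
  assumes "0 < R" "0 < Q" "0 < N" "0 < s"
  shows "(exp (1 / s * ln R + 1 / s * ln Q) / N) powr s = R * Q / N powr s"
proof -
  have "(exp (1 / s * ln R + 1 / s * ln Q) / N) powr s = exp (1 / s * ln R + 1 / s * ln Q) powr s / N powr s"
    using assms by (simp add: powr_divide)
  also have "exp (1 / s * ln R + 1 / s * ln Q) powr s = exp (ln R + ln Q)"
    using assms by (simp add: powr_def field_simps)
  also have "\<dots> = R * Q" using assms by (simp add: exp_add)
  finally show ?thesis .
qed

lemma exp_form2:
  fixes R S N s :: real
  assumes "0 < R" "0 < S" "0 < N" "0 < s" "s < 1"
  shows "(exp (1 / s * ln R + 1 / s * ln (S powr (1 - s))) / N) powr (s / (1 - s))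
        = R powr (1 / (1 - s)) * S / N powr (s / (1 - s))"
proof -
  have "(exp (1 / s * ln R + 1 / s * ln (S powr (1 - s))) / N) powr (s / (1 - s))
      = exp (1 / s * ln R + 1 / s * ln (S powr (1 - s))) powr (s / (1 - s)) / N powr (s / (1 - s))"
    using assms by (simp add: powr_divide)
  also have "exp (1 / s * ln R + 1 / s * ln (S powr (1 - s))) powr (s / (1 - s)) = exp (1 / (1 - s) * ln R + ln S)"
  proof -
    have "ln (S powr (1 - s)) = (1 - s) * ln S" using assms by (simp add: ln_powr)
    then show ?thesis using assms by (simp add: powr_def field_simps)
  qed
  also have "\<dots> = R powr (1 / (1 - s)) * S" using assms by (simp add: exp_add powr_def)
  finally show ?thesis .
qed


theorem mainTheorem5:
  fixes P :: "('x::{finite, ab_group_add} \<times> 'z::finite) \<Rightarrow> real"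
    and PM :: "'m::finite \<Rightarrow> real"
  assumes "is_dist P" and "is_dist PM"
  shows "(\<forall>s::real. 0 < s \<and> s < 1 \<longrightarrow>
           Pjs PM (cond_add_channel P)
             \<le> (exp (renyi_ent s PM + H_down s P) / real (card (UNIV :: 'x set))) powr s)
       \<and> (\<forall>s::real. 0 < s \<and> s \<le> 1/2 \<longrightarrow>
           Pjs PM (cond_add_channel P)
             \<le> (exp (renyi_ent s PM + H_up s P) / real (card (UNIV :: 'x set))) powr (s / (1 - s)))"
proof -
  have P0: "\<And>p. 0 \<le> P p" and PM0: "\<And>m. 0 \<le> PM m" and PM1: "(\<Sum>m\<in>UNIV. PM m) = 1"
    using assms unfolding is_dist_def by auto
  define N where "N = real (card (UNIV::'x set))"
  have N0: "0 < N" unfolding N_def by (simp add: finite_UNIV_card_ge_0)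
  obtain p0 where p0: "0 < P p0" using exists_pos[OF assms(1)] by blast
  show ?thesis
  proof (intro conjI allI impI)
    fix s :: real assume s: "0 < s \<and> s < 1"
    define R where "R = (\<Sum>m\<in>UNIV. PM m powr (1 - s))"
    define Q where "Q = (\<Sum>z\<in>UNIV. \<Sum>x\<in>UNIV. P (x, z) powr (1 - s) * marg_Z P z powr s)"
    have R0: "0 < R" unfolding R_def by (rule sum_powr_pos[OF assms(2)])
    have Qeq: "(\<Sum>p\<in>{p. P p \<noteq> 0}. P p powr (1 - s) * marg_Z P (snd p) powr s) = Q"
      unfolding Q_def using s by (intro supp_sum) auto
    have Q0: "0 < Q"
    proof -
      obtain x0 z0 where pz: "p0 = (x0, z0)" by (cases p0)
      have "P (x0, z0) \<le> marg_Z P z0" unfolding marg_Z_def using P0 by (intro member_le_sum) auto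
      then have mpos: "0 < marg_Z P z0" using p0 pz by simp
      have "0 < P (x0, z0) powr (1 - s) * marg_Z P z0 powr s" using p0 pz mpos by simp
      also have "\<dots> \<le> (\<Sum>x\<in>UNIV. P (x, z0) powr (1 - s) * marg_Z P z0 powr s)"
        by (rule member_le_sum) auto
      also have "\<dots> \<le> Q" unfolding Q_def by (rule member_le_sum) (auto intro!: sum_nonneg)
      finally show ?thesis .
    qed
    have "Pjs PM (cond_add_channel P) \<le> (\<Sum>m\<in>UNIV. PM m powr (1 - 1 * s)) * (\<Sum>m\<in>UNIV. PM m powr 1) powr s
     * (\<Sum>z\<in>UNIV. \<Sum>x\<in>UNIV. P (x, z) powr (1 - 1 * s) * (\<Sum>x'\<in>UNIV. P (x', z) powr 1) powr s)
     / N powr s"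
      unfolding N_def using s by (intro add_channel_bound P0 PM0) auto
    also have "\<dots> = R * Q / N powr s"
      unfolding R_def Q_def marg_Z_def using PM0 P0 PM1 by simp
    also have "\<dots> = (exp (renyi_ent s PM + H_down s P) / N) powr s"
      unfolding renyi_ent_def H_down_def cond_renyi_def Qeq R_def[symmetric]
      using exp_form1[OF R0 Q0 N0] s by simp
    finally show "Pjs PM (cond_add_channel P) \<le> (exp (renyi_ent s PM + H_down s P) / real (card (UNIV :: 'x set))) powr s"
      unfolding N_def .
  next
    fix s :: real assume s: "0 < s \<and> s \<le> 1/2"
    define \<rho> where "\<rho> = s / (1 - s)"
    define R where "R = (\<Sum>m\<in>UNIV. PM m powr (1 - s))"
    define A where "A = (\<lambda>z. \<Sum>x\<in>UNIV. P (x, z) powr (1 - s))"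
    define S where "S = (\<Sum>z\<in>UNIV. A z powr (1 / (1 - s)))"
    have r: "0 < \<rho>" "\<rho> \<le> 1" unfolding \<rho>_def using s by (auto simp: field_simps)
    have R0: "0 < R" unfolding R_def by (rule sum_powr_pos[OF assms(2)])
    have A0: "0 \<le> A z" for z unfolding A_def by (simp add: sum_nonneg)
    have S0: "0 < S"
    proof -
      obtain x0 z0 where pz: "p0 = (x0, z0)" by (cases p0)
      have "P (x0, z0) powr (1 - s) \<le> A z0" unfolding A_def by (intro member_le_sum) auto
      then have Apos: "0 < A z0" using p0 pz by (smt (verit) powr_gt_zero)
      then have "0 < A z0 powr (1 / (1 - s))" by simp
      also have "\<dots> \<le> S" unfolding S_def by (rule member_le_sum) auto
      finally show ?thesis .
    qed
    have us: "1 - (1 - s) * \<rho> = 1 - s" unfolding \<rho>_def using s by (simp add: field_simps)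
    have "Pjs PM (cond_add_channel P) \<le> (\<Sum>m\<in>UNIV. PM m powr (1 - (1 - s) * \<rho>)) * (\<Sum>m\<in>UNIV. PM m powr (1 - s)) powr \<rho>
     * (\<Sum>z\<in>UNIV. \<Sum>x\<in>UNIV. P (x, z) powr (1 - (1 - s) * \<rho>) * (\<Sum>x'\<in>UNIV. P (x', z) powr (1 - s)) powr \<rho>)
     / N powr \<rho>"
      unfolding N_def using s r by (intro add_channel_bound P0 PM0) auto
    also have "\<dots> = R * R powr \<rho> * (\<Sum>z\<in>UNIV. A z * A z powr \<rho>) / N powr \<rho>"
      unfolding us R_def[symmetric] A_def by (simp add: sum_distrib_right)
    also have "(\<Sum>z\<in>UNIV. A z * A z powr \<rho>) = S"
      unfolding S_def
    proof (rule sum.cong[OF refl])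
      fix z
      have "1 / (1 - s) = 1 + \<rho>" unfolding \<rho>_def using s by (simp add: field_simps)
      then show "A z * A z powr \<rho> = A z powr (1 / (1 - s))"
        using A0[of z] by (cases "A z = 0") (auto simp: powr_add)
    qed
    also have "R * R powr \<rho> = R powr (1 / (1 - s))"
    proof -
      have "1 / (1 - s) = 1 + \<rho>" unfolding \<rho>_def using s by (simp add: field_simps)
      then show ?thesis using R0 by (simp add: powr_add)
    qed
    also have "R powr (1 / (1 - s)) * S / N powr \<rho>
       = (exp (1 / s * ln R + 1 / s * ln (S powr (1 - s))) / N) powr \<rho>"
      unfolding \<rho>_def using exp_form2[OF R0 S0 N0] s by simp
    also have "S powr (1 - s) = (\<Sum>p\<in>{p. P p \<noteq> 0}. P p powr (1 - s) * tilted_Z s P (snd p) powr s)"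
    proof -
      have tz: "tilted_Z s P z = A z powr (1 / (1 - s)) / S" for z
        unfolding tilted_Z_def A_def S_def by simp
      have "(\<Sum>p\<in>{p. P p \<noteq> 0}. P p powr (1 - s) * tilted_Z s P (snd p) powr s)
          = (\<Sum>z\<in>UNIV. \<Sum>x\<in>UNIV. P (x, z) powr (1 - s) * tilted_Z s P z powr s)"
        using s by (intro supp_sum) auto
      also have "\<dots> = (\<Sum>z\<in>UNIV. A z * tilted_Z s P z powr s)"
        unfolding A_def by (simp add: sum_distrib_right)
      also have "\<dots> = (\<Sum>z\<in>UNIV. A z powr (1 / (1 - s)) / S powr s)"
      proof (rule sum.cong[OF refl])
        fix z
        have e1: "1 / (1 - s) * s = \<rho>" unfolding \<rho>_def by simp
        have e2: "1 / (1 - s) = 1 + \<rho>" unfolding \<rho>_def using s by (simp add: field_simps)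
        have "tilted_Z s P z powr s = A z powr \<rho> / S powr s"
          unfolding tz using A0[of z] S0 by (simp add: powr_divide powr_powr \<rho>_def)
        then show "A z * tilted_Z s P z powr s = A z powr (1 / (1 - s)) / S powr s"
          using A0[of z] by (cases "A z = 0") (auto simp: powr_add e2)
      qed
      also have "\<dots> = S / S powr s" unfolding S_def by (simp add: sum_divide_distrib)
      also have "\<dots> = S powr (1 - s)" using S0 by (simp add: powr_diff)
      finally show ?thesis by simp
    qed
    finally show "Pjs PM (cond_add_channel P) \<le> (exp (renyi_ent s PM + H_up s P) / real (card (UNIV :: 'x set))) powr (s / (1 - s))"
      unfolding renyi_ent_def H_up_def cond_renyi_def R_def N_def \<rho>_def by simp
  qed
qed

end
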